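(* Let $G,H,L\colon\mathbb{R}^n\to\mathbb{R}^n$ be positive semidefinite linear maps and let $k\in\{1,\dots,n\}$. Assume that $$\left\langle\left(\wedge^k G+\wedge^k H\right)\xi,\xi\right\rangle=\left\langle\left(\wedge^k L\right)\xi,\xi\right\rangle$$ for all decomposable $\xi\in\bigwedge^k\mathbb{R}^n$. Then $\wedge^k G+\wedge^k H=\wedge^k L$.
   Context: $\bigwedge^k\mathbb{R}^n$ is the $k$-th exterior power with the inner product determined by $\langle u_1\wedge\dots\wedge u_k, v_1\wedge\dots\wedge v_k\rangle=\det(\langle u_i,v_j\rangle)_{i,j=1}^k$. For a linear map $A$, $\wedge^k A$ is the induced linear map on $\bigwedge^k\mathbb{R}^n$ with $(\wedge^kA)(v_1\wedge\dots\wedge v_k)=Av_1\wedge\dots\wedge Av_k$. A $k$-vector is decomposable if it is of the form $v_1\wedge\dots\wedge v_k$. *)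

theory Defs
  imports "HOL-Analysis.Analysis"
begin

text \<open>Concrete model: R^n is represented by functions nat => real (only coordinates < n matter),
linear maps R^n -> R^n by their matrices (nat => nat => real, entries with indices < n) in the
standard basis.  The k-th exterior power is represented in its standard orthonormal basis
e_I = e_{i_1} wedge ... wedge e_{i_k}, indexed by the k-element subsets I of {0..<n}
(elements listed in increasing order).\<close>

definition ksubsets :: "nat \<Rightarrow> nat \<Rightarrow> nat set set" where
  "ksubsets n k = {I. I \<subseteq> {..<n} \<and> card I = k}"

definition ldet :: "nat \<Rightarrow> (nat \<Rightarrow> nat \<Rightarrow> real) \<Rightarrow> real" where
  "ldet k M = (\<Sum>p\<in>{p. p permutes {..<k}}. of_int (sign p) * (\<Prod>i<k. M i (p i)))"

text \<open>Matrix entry (I,J) of wedge^k A: the minor det(A[I,J]).\<close>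
definition ext_pow :: "nat \<Rightarrow> (nat \<Rightarrow> nat \<Rightarrow> real) \<Rightarrow> nat set \<Rightarrow> nat set \<Rightarrow> real" where
  "ext_pow k A I J = ldet k (\<lambda>a b. A (sorted_list_of_set I ! a) (sorted_list_of_set J ! b))"

text \<open>Coordinates of the decomposable k-vector v_0 wedge ... wedge v_{k-1}:
 <v_0 wedge ... wedge v_{k-1}, e_I> = det(<v_a, e_{I_b}>).\<close>
definition wedge :: "nat \<Rightarrow> (nat \<Rightarrow> nat \<Rightarrow> real) \<Rightarrow> nat set \<Rightarrow> real" where
  "wedge k vs I = ldet k (\<lambda>a b. vs a (sorted_list_of_set I ! b))"

definition ext_apply :: "nat \<Rightarrow> nat \<Rightarrow> (nat set \<Rightarrow> nat set \<Rightarrow> real) \<Rightarrow> (nat set \<Rightarrow> real) \<Rightarrow> nat set \<Rightarrow> real" where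
  "ext_apply n k M xi = (\<lambda>I. \<Sum>J\<in>ksubsets n k. M I J * xi J)"

definition ext_inner :: "nat \<Rightarrow> nat \<Rightarrow> (nat set \<Rightarrow> real) \<Rightarrow> (nat set \<Rightarrow> real) \<Rightarrow> real" where
  "ext_inner n k xi eta = (\<Sum>I\<in>ksubsets n k. xi I * eta I)"

definition psd :: "nat \<Rightarrow> (nat \<Rightarrow> nat \<Rightarrow> real) \<Rightarrow> bool" where
  "psd n A \<longleftrightarrow> (\<forall>i<n. \<forall>j<n. A i j = A j i) \<and>
     (\<forall>x::nat \<Rightarrow> real. 0 \<le> (\<Sum>i<n. \<Sum>j<n. x i * A i j * x j))"

end

theory Submission
  imports Defs
begin

lemma ldet_perm_rows:
  assumes q: "q permutes {..<k}"
  shows "(\<Sum>p\<in>{p. p permutes {..<k}}. of_int (sign p) * (\<Prod>a<k. M (q a) (p a)))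
         = of_int (sign q) * ldet k M"
proof -
  have qi: "inv q permutes {..<k}" using q by (rule permutes_inv)
  have pq: "permutation q" using q by (metis finite_lessThan permutation_permutes)
  have pqi: "permutation (inv q)" using qi by (metis finite_lessThan permutation_permutes)
  have "ldet k M = (\<Sum>p\<in>{p. p permutes {..<k}}. of_int (sign (p \<circ> inv q)) * (\<Prod>i<k. M i ((p \<circ> inv q) i)))"
    unfolding ldet_def by (rule sum_permutations_compose_right[OF qi])
  also have "\<dots> = (\<Sum>p\<in>{p. p permutes {..<k}}. of_int (sign q) * (of_int (sign p) * (\<Prod>a<k. M (q a) (p a))))"
  proof (rule sum.cong[OF refl])
    fix p assume "p \<in> {p. p permutes {..<k}}"
    then have pp: "permutation p" by (metis finite_lessThan permutation_permutes mem_Collect_eq)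
    have s: "sign (p \<circ> inv q) = sign p * sign q"
      using sign_compose[OF pp pqi] sign_inverse[OF pq] by simp
    have "(\<Prod>i<k. M i ((p \<circ> inv q) i)) = (\<Prod>a<k. M (q a) ((p \<circ> inv q) (q a)))"
      using prod.reindex_bij_betw[OF permutes_imp_bij[OF q], of "\<lambda>i. M i ((p \<circ> inv q) i)"]
      by simp
    also have "\<dots> = (\<Prod>a<k. M (q a) (p a))"
      using permutes_inverses(2)[OF q] by simp
    finally show "of_int (sign (p \<circ> inv q)) * (\<Prod>i<k. M i ((p \<circ> inv q) i)) =
         of_int (sign q) * (of_int (sign p) * (\<Prod>a<k. M (q a) (p a)))"
      by (simp add: s)
  qed
  also have "\<dots> = of_int (sign q) * (\<Sum>p\<in>{p. p permutes {..<k}}. of_int (sign p) * (\<Prod>a<k. M (q a) (p a)))"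
    by (simp add: sum_distrib_left)
  finally have "of_int (sign q) * ldet k M = of_int (sign q) * of_int (sign q) * (\<Sum>p\<in>{p. p permutes {..<k}}. of_int (sign p) * (\<Prod>a<k. M (q a) (p a)))"
    by simp
  also have "of_int (sign q) * of_int (sign q) = (1::real)"
    by (metis of_int_1 of_int_mult sign_idempotent)
  finally show ?thesis by simp
qed


lemma ldet_expand:
  fixes M :: "nat \<Rightarrow> nat \<Rightarrow> real" and lam :: "'r \<Rightarrow> real" and v :: "'r \<Rightarrow> nat \<Rightarrow> real"
  assumes R: "finite R"
    and M: "\<And>a b. a < k \<Longrightarrow> b < k \<Longrightarrow> M a b = (\<Sum>r\<in>R. lam r * v r (x a) * v r (y b))"
  shows "fact k * ldet k M = (\<Sum>f\<in>PiE {..<k} (\<lambda>_. R).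
           (\<Prod>a<k. lam (f a)) * ldet k (\<lambda>a b. v (f a) (x b)) * ldet k (\<lambda>a b. v (f a) (y b)))"
proof -
  let ?P = "{p. p permutes {..<k}}"
  let ?F = "PiE {..<k} (\<lambda>_. R)"
  have fP: "finite ?P" by (simp add: finite_permutations)
  have fF: "finite ?F" using R by (simp add: finite_PiE)
  have "fact k * ldet k M = (\<Sum>q\<in>?P. of_int (sign q) * (of_int (sign q) * ldet k M))"
  proof -
    have "(\<Sum>q\<in>?P. of_int (sign q) * (of_int (sign q) * ldet k M)) = (\<Sum>q\<in>?P. ldet k M)"
      by (intro sum.cong refl) (metis mult.assoc mult_1 of_int_1 of_int_mult sign_idempotent)
    also have "\<dots> = fact k * ldet k M"
      using card_permutations[of "{..<k}" k] by simp
    finally show ?thesis by simp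
  qed
  also have "\<dots> = (\<Sum>q\<in>?P. \<Sum>p\<in>?P. of_int (sign q) * (of_int (sign p) * (\<Prod>a<k. M (q a) (p a))))"
  proof (intro sum.cong refl)
    fix q assume "q \<in> ?P"
    then have "q permutes {..<k}" by simp
    from ldet_perm_rows[OF this, of M] show "of_int (sign q) * (of_int (sign q) * ldet k M) =
      (\<Sum>p\<in>?P. of_int (sign q) * (of_int (sign p) * (\<Prod>a<k. M (q a) (p a))))"
      by (simp add: sum_distrib_left[symmetric])
  qed
  also have "\<dots> = (\<Sum>q\<in>?P. \<Sum>p\<in>?P. \<Sum>f\<in>?F. of_int (sign q) * (of_int (sign p) *
        ((\<Prod>a<k. lam (f a)) * (\<Prod>a<k. v (f a) (x (q a))) * (\<Prod>a<k. v (f a) (y (p a))))))"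
  proof (intro sum.cong refl)
    fix q p assume q: "q \<in> ?P" and p: "p \<in> ?P"
    have "(\<Prod>a<k. M (q a) (p a)) = (\<Prod>a<k. \<Sum>r\<in>R. lam r * v r (x (q a)) * v r (y (p a)))"
    proof (intro prod.cong refl)
      fix a assume "a \<in> {..<k}"
      then have "q a < k" "p a < k" using q p permutes_in_image by fastforce+
      then show "M (q a) (p a) = (\<Sum>r\<in>R. lam r * v r (x (q a)) * v r (y (p a)))" by (rule M)
    qed
    also have "\<dots> = (\<Sum>f\<in>?F. \<Prod>a<k. lam (f a) * v (f a) (x (q a)) * v (f a) (y (p a)))"
      by (rule prod_sum_PiE) (auto simp: R)
    also have "\<dots> = (\<Sum>f\<in>?F. (\<Prod>a<k. lam (f a)) * (\<Prod>a<k. v (f a) (x (q a))) * (\<Prod>a<k. v (f a) (y (p a))))"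
      by (simp add: prod.distrib)
    finally show "of_int (sign q) * (of_int (sign p) * (\<Prod>a<k. M (q a) (p a))) =
      (\<Sum>f\<in>?F. of_int (sign q) * (of_int (sign p) *
        ((\<Prod>a<k. lam (f a)) * (\<Prod>a<k. v (f a) (x (q a))) * (\<Prod>a<k. v (f a) (y (p a))))))"
      by (simp add: sum_distrib_left)
  qed
  also have "\<dots> = (\<Sum>f\<in>?F. \<Sum>q\<in>?P. \<Sum>p\<in>?P. of_int (sign q) * (of_int (sign p) *
        ((\<Prod>a<k. lam (f a)) * (\<Prod>a<k. v (f a) (x (q a))) * (\<Prod>a<k. v (f a) (y (p a))))))"
    apply (subst sum.swap[of _ ?P ?F] )
    apply (rule sum.cong[OF refl], rule sum.swap)
    done
  also have "\<dots> = (\<Sum>f\<in>?F.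
           (\<Prod>a<k. lam (f a)) * ldet k (\<lambda>a b. v (f a) (x b)) * ldet k (\<lambda>a b. v (f a) (y b)))"
    unfolding ldet_def
    by (intro sum.cong refl) (simp add: sum_distrib_left sum_distrib_right mult_ac)
  finally show ?thesis .
qed


definition lamc :: "(nat \<Rightarrow> nat \<Rightarrow> real) \<Rightarrow> nat \<times> nat \<times> bool \<Rightarrow> real" where
  "lamc G r = (case r of (p, q, b) \<Rightarrow> (if b then 1 else -1) * G p q / 4)"
definition vv :: "nat \<times> nat \<times> bool \<Rightarrow> nat \<Rightarrow> real" where
  "vv r i = (case r of (p, q, b) \<Rightarrow> of_bool (i = p) + (if b then 1 else -1) * of_bool (i = q))"

lemma alg4: "(g / 4) * (a + c) * (b + d) + (- 1 * g / 4) * (a + - 1 * c) * (b + - 1 * d) = g / 2 * (a * d + c * b)"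
  for a b c d g :: real by (simp add: field_simps)

lemma dd:
  assumes "i < (n::nat)" "j < n"
  shows "(\<Sum>p<n. \<Sum>q<n. if p = i \<and> q = j then c p q else 0) = (c i j::real)"
proof -
  have "(\<Sum>q<n. if p = i \<and> q = j then c p q else 0) = (if p = i then c p j else 0)" for p
    using assms by (cases "p = i") (simp_all add: sum.delta)
  then show ?thesis using assms by (simp add: sum.delta sum.delta')
qed

lemma rep:
  fixes G :: "nat \<Rightarrow> nat \<Rightarrow> real"
  assumes sym: "\<forall>i<n. \<forall>j<n. G i j = G j i" and i: "i < n" and j: "j < n"
  shows "G i j = (\<Sum>r\<in>{..<n} \<times> {..<n} \<times> UNIV. lamc G r * vv r i * vv r j)"
proof -
  have b: "(\<Sum>b\<in>(UNIV::bool set). h b) = h True + h False" for h :: "bool \<Rightarrow> real"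
    by (simp add: UNIV_bool)
  have "(\<Sum>r\<in>{..<n} \<times> {..<n} \<times> UNIV. lamc G r * vv r i * vv r j)
     = (\<Sum>p<n. \<Sum>q<n. \<Sum>b\<in>UNIV. lamc G (p, q, b) * vv (p, q, b) i * vv (p, q, b) j)"
    by (simp add: sum.cartesian_product)
  also have "\<dots> = (\<Sum>p<n. \<Sum>q<n. G p q / 2 * (of_bool (i = p) * of_bool (j = q) + of_bool (i = q) * of_bool (j = p)))"
  proof (intro sum.cong refl)
    fix p q
    show "(\<Sum>b\<in>UNIV. lamc G (p, q, b) * vv (p, q, b) i * vv (p, q, b) j) =
      G p q / 2 * (of_bool (i = p) * of_bool (j = q) + of_bool (i = q) * of_bool (j = p))"
      unfolding b lamc_def vv_def by (simp only: prod.case if_True if_False alg4 mult_1)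
  qed
  also have "\<dots> = (\<Sum>p<n. \<Sum>q<n. (if p = i \<and> q = j then G p q / 2 else 0)) + (\<Sum>p<n. \<Sum>q<n. (if p = j \<and> q = i then G p q / 2 else 0))"
  proof -
    have pt: "G p q / 2 * (of_bool (i = p) * of_bool (j = q) + of_bool (i = q) * of_bool (j = p))
      = (if p = i \<and> q = j then G p q / 2 else 0) + (if p = j \<and> q = i then G p q / 2 else 0)" for p q
      by (cases "p = i"; cases "q = j"; cases "p = j"; cases "q = i") simp_all
    show ?thesis by (simp only: pt sum.distrib)
  qed
  also have "\<dots> = G i j / 2 + G j i / 2"
    using i j by (simp only: dd[OF i j] dd[OF j i])
  also have "\<dots> = G i j" using sym i j by simp
  finally show ?thesis ..
qed


lemma sorted_nth_lt:
  assumes "I \<in> ksubsets n k" "a < k"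
  shows "sorted_list_of_set I ! a < n"
proof -
  have I: "I \<subseteq> {..<n}" "card I = k" using assms(1) by (auto simp: ksubsets_def)
  then have fin: "finite I" using finite_subset by blast
  have "sorted_list_of_set I ! a \<in> set (sorted_list_of_set I)"
    using assms(2) I fin by (intro nth_mem) simp
  then show ?thesis using fin I by auto
qed

lemma ext_pow_rep:
  assumes sym: "\<forall>i<n. \<forall>j<n. G i j = G j i" and I: "I \<in> ksubsets n k" and J: "J \<in> ksubsets n k"
  shows "fact k * ext_pow k G I J = (\<Sum>f\<in>PiE {..<k} (\<lambda>_. {..<n} \<times> {..<n} \<times> UNIV).
     (\<Prod>a<k. lamc G (f a)) * wedge k (\<lambda>a. vv (f a)) I * wedge k (\<lambda>a. vv (f a)) J)"
  unfolding ext_pow_def wedge_def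
  by (rule ldet_expand) (auto intro!: rep[OF sym] sorted_nth_lt[OF I] sorted_nth_lt[OF J])

theorem lemma3p1:
  fixes n k :: nat and G H L :: "nat \<Rightarrow> nat \<Rightarrow> real"
  assumes "psd n G" and "psd n H" and "psd n L"
    and "1 \<le> k" and "k \<le> n"
    and "\<forall>vs. ext_inner n k (ext_apply n k (\<lambda>I J. ext_pow k G I J + ext_pow k H I J) (wedge k vs)) (wedge k vs)
             = ext_inner n k (ext_apply n k (ext_pow k L) (wedge k vs)) (wedge k vs)"
  shows "\<forall>I\<in>ksubsets n k. \<forall>J\<in>ksubsets n k. ext_pow k G I J + ext_pow k H I J = ext_pow k L I J"
proof -
  let ?K = "ksubsets n k"
  let ?F = "PiE {..<k} (\<lambda>_. {..<n} \<times> {..<n} \<times> (UNIV::bool set))"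
  define N where "N I J = ext_pow k G I J + ext_pow k H I J - ext_pow k L I J" for I J
  define w where "w f = wedge k (\<lambda>a. vv (f a))" for f :: "nat \<Rightarrow> nat \<times> nat \<times> bool"
  define lam where "lam f = (\<Prod>a<k. lamc G (f a)) + (\<Prod>a<k. lamc H (f a)) - (\<Prod>a<k. lamc L (f a))"
    for f :: "nat \<Rightarrow> nat \<times> nat \<times> bool"
  have finK: "finite ?K"
  proof -
    have "?K \<subseteq> Pow {..<n}" by (auto simp: ksubsets_def)
    then show ?thesis by (rule finite_subset) simp
  qed
  have symG: "\<forall>i<n. \<forall>j<n. G i j = G j i" using assms(1) by (simp add: psd_def)
  have symH: "\<forall>i<n. \<forall>j<n. H i j = H j i" using assms(2) by (simp add: psd_def)
  have symL: "\<forall>i<n. \<forall>j<n. L i j = L j i" using assms(3) by (simp add: psd_def)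
  have Q0: "(\<Sum>I\<in>?K. \<Sum>J\<in>?K. N I J * (xi I * xi J)) = 0" if "xi = wedge k vs" for xi vs
  proof -
    have "ext_inner n k (ext_apply n k (\<lambda>I J. ext_pow k G I J + ext_pow k H I J) xi) xi
             = ext_inner n k (ext_apply n k (ext_pow k L) xi) xi"
      using assms(6) that by blast
    then have "(\<Sum>I\<in>?K. \<Sum>J\<in>?K. (ext_pow k G I J + ext_pow k H I J) * (xi I * xi J))
      - (\<Sum>I\<in>?K. \<Sum>J\<in>?K. ext_pow k L I J * (xi I * xi J)) = 0"
      unfolding ext_inner_def ext_apply_def
      by (simp add: sum_distrib_left mult_ac)
    then show ?thesis
      unfolding N_def by (simp add: sum_subtractf[symmetric] left_diff_distrib)
  qed
  have Nrep: "fact k * N I J = (\<Sum>f\<in>?F. lam f * (w f I * w f J))" if "I \<in> ?K" "J \<in> ?K" for I J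
    unfolding N_def lam_def w_def
    using ext_pow_rep[OF symG that, unfolded] ext_pow_rep[OF symH that] ext_pow_rep[OF symL that]
    by (simp add: right_diff_distrib distrib_left sum.distrib sum_subtractf left_diff_distrib
        distrib_right mult_ac)
  have "fact k * (\<Sum>I\<in>?K. \<Sum>J\<in>?K. N I J * N I J) = (\<Sum>I\<in>?K. \<Sum>J\<in>?K. N I J * (fact k * N I J))"
    by (simp add: sum_distrib_left mult_ac)
  also have "\<dots> = (\<Sum>I\<in>?K. \<Sum>J\<in>?K. \<Sum>f\<in>?F. lam f * (N I J * (w f I * w f J)))"
    by (intro sum.cong refl) (simp add: Nrep sum_distrib_left mult_ac)
  also have "\<dots> = (\<Sum>I\<in>?K. \<Sum>f\<in>?F. \<Sum>J\<in>?K. lam f * (N I J * (w f I * w f J)))"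
    by (rule sum.cong[OF refl], rule sum.swap)
  also have "\<dots> = (\<Sum>f\<in>?F. \<Sum>I\<in>?K. \<Sum>J\<in>?K. lam f * (N I J * (w f I * w f J)))"
    by (rule sum.swap)
  also have "\<dots> = (\<Sum>f\<in>?F. lam f * (\<Sum>I\<in>?K. \<Sum>J\<in>?K. N I J * (w f I * w f J)))"
    by (simp add: sum_distrib_left)
  also have "\<dots> = 0"
    using Q0[OF w_def] by simp
  finally have "(\<Sum>I\<in>?K. \<Sum>J\<in>?K. N I J * N I J) = 0" by simp
  then have "\<forall>I\<in>?K. (\<Sum>J\<in>?K. N I J * N I J) = 0"
    using finK by (subst (asm) sum_nonneg_eq_0_iff) (auto intro: sum_nonneg)
  then have "\<forall>I\<in>?K. \<forall>J\<in>?K. N I J * N I J = 0"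
    using finK by (auto simp: sum_nonneg_eq_0_iff)
  then show ?thesis unfolding N_def by simp
qed

end
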